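(* Let $Y$ be an Abelian group, let $\varphi_1,\dots,\varphi_m$ and $\psi_1,\dots,\psi_n$ be functions on $Y$, let $a_1,\dots,a_m,b_1,\dots,b_m,c_1,\dots,c_n,d_1,\dots,d_n$ be integers, and let $q(u,v)$ be a continuous polynomial of degree $l$ on $Y^2$, such that $$\sum_{j=1}^m\varphi_j(a_ju+b_jv)=\sum_{j=1}^n\psi_j(c_ju+d_jv)+q(u,v),\quad u,v\in Y.$$ Then for each $j\in\{1,\dots,m\}$, for all $u,v,h,k,k_1,\dots,k_n\in Y$ and all $l_i\in Y$ ($i\in\{1,\dots,m\}\setminus\{j\}$), $$\Big[\Delta_{a_jh+b_jk}^{l+1}\prod_{i\in\{1,\dots,m\},\,i\neq j}\Delta_{(a_jb_i-b_ja_i)l_i}\prod_{s=1}^n\Delta_{(a_jd_s-b_jc_s)k_s}\varphi_j\Big](a_ju+b_jv)=0,$$ where the product denotes composition of the (commuting) difference operators. Moreover, if $q\equiv 0$, the same holds with the operator $\Delta_{a_jh+b_jk}^{l+1}$ omitted.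
   Context: For a function $f$ on an Abelian group $G$ and $h\in G$, $\Delta_hf(y)=f(y+h)-f(y)$. A function $f$ on $G$ is a polynomial if $\Delta_h^{l+1}f(y)=0$ for some $l$ and all $y,h\in G$; the minimal such $l$ is its degree. *)

theory Defs
  imports "HOL-Analysis.Analysis"
begin

definition zmult :: "int \<Rightarrow> 'a::ab_group_add \<Rightarrow> 'a" where
  "zmult k y = (if 0 \<le> k then (\<Sum>_<nat k. y) else - (\<Sum>_<nat (- k). y))"

definition Delta :: "'a::ab_group_add \<Rightarrow> ('a \<Rightarrow> 'b::ab_group_add) \<Rightarrow> 'a \<Rightarrow> 'b" where
  "Delta h f = (\<lambda>y. f (y + h) - f y)"

definition Deltas :: "'a::ab_group_add list \<Rightarrow> ('a \<Rightarrow> 'b::ab_group_add) \<Rightarrow> 'a \<Rightarrow> 'b" where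
  "Deltas hs f = foldr Delta hs f"

definition poly_le :: "('a::ab_group_add \<Rightarrow> 'b::ab_group_add) \<Rightarrow> nat \<Rightarrow> bool" where
  "poly_le f l \<longleftrightarrow> (\<forall>y h. (Delta h ^^ (Suc l)) f y = 0)"

definition poly_degree :: "('a::ab_group_add \<Rightarrow> 'b::ab_group_add) \<Rightarrow> nat \<Rightarrow> bool" where
  "poly_degree f l \<longleftrightarrow> poly_le f l \<and> (\<forall>l'<l. \<not> poly_le f l')"

end

theory Submission
  imports Defs
begin

lemma zmult_0[simp]: "zmult 0 y = 0" by (simp add: zmult_def)

lemma zmult_1[simp]: "zmult 1 y = y" by (simp add: zmult_def)

lemma zmult_plus1: "zmult (k + 1) y = zmult k y + (y::'a::ab_group_add)"
proof (cases "0 \<le> k")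
  case True
  then have "nat (k+1) = Suc (nat k)" by simp
  then show ?thesis using True by (simp add: zmult_def add.commute)
next
  case False
  show ?thesis
  proof (cases "k = -1")
    case True then show ?thesis by (simp add: zmult_def)
  next
    case F: False
    with False have "nat (-k) = Suc (nat (-(k+1)))" by simp
    then show ?thesis using False F by (simp add: zmult_def algebra_simps)
  qed
qed

lemma zmult_minus1: "zmult (k - 1) y = zmult k y - (y::'a::ab_group_add)"
  using zmult_plus1[of "k-1" y] by simp

lemma zmult_addk: "zmult (k + k') y = zmult k y + zmult k' (y::'a::ab_group_add)"
proof (induction k' rule: int_induct[where k=0])
  case base then show ?case by simp
next
  case (step1 i)
  then show ?case using zmult_plus1[of "k+i" y] zmult_plus1[of i y]
    by (simp add: add.assoc[symmetric])
next
  case (step2 i)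
  have "zmult (k+(i-1)) y = zmult (k+i) y - y" by (metis zmult_minus1 add_diff_eq)
  then show ?case using step2 zmult_minus1[of i y]
    by (simp add: diff_add_eq add_diff_eq)
qed

lemma zmult_addy: "zmult k (x + y) = zmult k x + zmult k (y::'a::ab_group_add)"
proof (induction k rule: int_induct[where k=0])
  case base then show ?case by simp
next
  case (step1 i)
  then show ?case by (simp add: zmult_plus1)
next
  case (step2 i)
  then show ?case by (simp add: zmult_minus1)
qed

lemma zmult_y0[simp]: "zmult k (0::'a::ab_group_add) = 0" by (simp add: zmult_def)

lemma zmult_neg: "zmult k (- y) = - zmult k (y::'a::ab_group_add)"
proof -
  have "zmult k y + zmult k (-y) = 0" using zmult_addy[of k y "-y"] by simp
  then show ?thesis by (metis minus_unique)
qed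

lemma zmult_negk: "zmult (- k) y = - zmult k (y::'a::ab_group_add)"
proof -
  have "zmult k y + zmult (-k) y = 0" using zmult_addk[of k "-k" y] by simp
  then show ?thesis by (metis minus_unique)
qed

lemma zmult_mult: "zmult (k * k') y = zmult k (zmult k' (y::'a::ab_group_add))"
proof (induction k rule: int_induct[where k=0])
  case base then show ?case by simp
next
  case (step1 i)
  then show ?case by (simp add: distrib_right zmult_addk zmult_plus1)
next
  case (step2 i)
  then show ?case using zmult_addk[of "i*k'" "-k'" y] zmult_minus1[of i "zmult k' y"]
    by (simp add: left_diff_distrib zmult_addk zmult_negk)
qed

lemma zmult_diffk: "zmult (k - k') y = zmult k y - zmult k' (y::'a::ab_group_add)"
  using zmult_addk[of "k - k'" k' y] by simp

lemma Deltas_Cons: "Deltas (h # hs) f = Delta h (Deltas hs f)"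
  by (simp add: Deltas_def)

lemma Deltas_Nil: "Deltas [] f = f"
  by (simp add: Deltas_def)

lemma Deltas_append: "Deltas (xs @ ys) f = Deltas xs (Deltas ys f)"
  by (simp add: Deltas_def)

lemma Deltas_zero: "Deltas hs (\<lambda>_. 0) = (\<lambda>_. 0)"
  by (induction hs) (auto simp: Deltas_Nil Deltas_Cons Delta_def)

lemma Deltas_has0: "0 \<in> set hs \<Longrightarrow> Deltas hs f = (\<lambda>_. 0)"
proof (induction hs)
  case Nil then show ?case by simp
next
  case (Cons h hs)
  show ?case
  proof (cases "h = 0")
    case True then show ?thesis by (simp add: Deltas_Cons Delta_def)
  next
    case False
    with Cons have "Deltas hs f = (\<lambda>_. 0)" by simp
    then show ?thesis by (simp add: Deltas_Cons Delta_def)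
  qed
qed

lemma Delta_comm: "Delta h (Delta g f) = Delta g (Delta h f)"
  by (simp add: Delta_def algebra_simps)

lemma Delta_Deltas_comm: "Delta h (Deltas ys f) = Deltas ys (Delta h f)"
proof (induction ys)
  case Nil then show ?case by (simp add: Deltas_Nil)
next
  case (Cons y ys) then show ?case by (metis Deltas_Cons Delta_comm)
qed

lemma Deltas_comm: "Deltas xs (Deltas ys f) = Deltas ys (Deltas xs f)"
proof (induction xs)
  case Nil then show ?case by (simp add: Deltas_Nil)
next
  case (Cons x xs) then show ?case by (simp add: Deltas_Cons Delta_Deltas_comm)
qed

lemma Deltas_add: "Deltas hs (\<lambda>p. f p + g p) = (\<lambda>p. Deltas hs f p + Deltas hs g p)"
  by (induction hs) (auto simp: Deltas_Nil Deltas_Cons Delta_def algebra_simps)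

lemma Deltas_sum: "Deltas hs (\<lambda>p. \<Sum>i\<in>A. F i p) = (\<lambda>p. \<Sum>i\<in>A. Deltas hs (F i) p)"
  by (induction hs) (auto simp: Deltas_Nil Deltas_Cons Delta_def sum_subtractf)

lemma Deltas_comp:
  assumes "\<And>x y. L (x + y) = L x + L y"
  shows "Deltas hs (\<lambda>p. g (L p)) = (\<lambda>p. Deltas (map L hs) g (L p))"
  by (induction hs) (auto simp: Deltas_Nil Deltas_Cons Delta_def assms)

lemma Deltas_replicate: "Deltas (replicate n h) f = (Delta h ^^ n) f"
  by (induction n) (auto simp: Deltas_Nil Deltas_Cons)

lemma Deltas_rep_zero: "(Delta H ^^ n) f = (\<lambda>_. 0) \<Longrightarrow> Deltas (replicate n H @ xs) f = (\<lambda>_. 0)"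
proof -
  assume a: "(Delta H ^^ n) f = (\<lambda>_. 0)"
  have "Deltas (replicate n H @ xs) f = Deltas xs (Deltas (replicate n H) f)"
    by (metis Deltas_append Deltas_comm)
  then show ?thesis by (simp only: Deltas_replicate a Deltas_zero)
qed

lemma Deltas_rep: "Deltas (replicate n H @ xs) f = (Delta H ^^ n) (Deltas xs f)"
  by (simp only: Deltas_append Deltas_replicate)

lemma Deltas_rep_zero2: "(Delta H ^^ n) f = (\<lambda>_. 0) \<Longrightarrow> (Delta H ^^ n) (Deltas xs f) = (\<lambda>_. 0)"
  using Deltas_rep_zero[where H=H and n=n and f=f and xs=xs] by (simp add: Deltas_rep)

theorem lemma4:
  fixes \<phi> :: "nat \<Rightarrow> 'a::{ab_group_add,topological_space} \<Rightarrow> complex"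
    and \<psi> :: "nat \<Rightarrow> 'a \<Rightarrow> complex"
    and a b c d :: "nat \<Rightarrow> int"
    and q :: "'a \<times> 'a \<Rightarrow> complex"
    and m n l :: nat
  assumes q_cont: "continuous_on UNIV q"
    and q_poly: "poly_degree q l"
    and eq: "\<And>u v. (\<Sum>j=1..m. \<phi> j (zmult (a j) u + zmult (b j) v))
               = (\<Sum>j=1..n. \<psi> j (zmult (c j) u + zmult (d j) v)) + q (u, v)"
  shows "(\<forall>j\<in>{1..m}. \<forall>u v h k. \<forall>ls ks :: nat \<Rightarrow> 'a.
            (Delta (zmult (a j) h + zmult (b j) k) ^^ Suc l)
              (Deltas (map (\<lambda>i. zmult (a j * b i - b j * a i) (ls i)) (filter (\<lambda>i. i \<noteq> j) [1..<Suc m])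
                       @ map (\<lambda>s. zmult (a j * d s - b j * c s) (ks s)) [1..<Suc n])
                 (\<phi> j))
              (zmult (a j) u + zmult (b j) v) = 0)
       \<and> (q = (\<lambda>_. 0) \<longrightarrow>
          (\<forall>j\<in>{1..m}. \<forall>u v. \<forall>ls ks :: nat \<Rightarrow> 'a.
            Deltas (map (\<lambda>i. zmult (a j * b i - b j * a i) (ls i)) (filter (\<lambda>i. i \<noteq> j) [1..<Suc m])
                    @ map (\<lambda>s. zmult (a j * d s - b j * c s) (ks s)) [1..<Suc n])
              (\<phi> j) (zmult (a j) u + zmult (b j) v) = 0))"
proof -
  define L where "L i p = zmult (a i) (fst p) + zmult (b i) (snd p)" for i and p :: "'a \<times> 'a"
  define M where "M s p = zmult (c s) (fst p) + zmult (d s) (snd p)" for s and p :: "'a \<times> 'a"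
  have Ladd: "L i (x + y) = L i x + L i y" for i x y
    by (simp add: L_def zmult_addy algebra_simps)
  have Madd: "M s (x + y) = M s x + M s y" for s x y
    by (simp add: M_def zmult_addy algebra_simps)
  have feq: "(\<lambda>p. \<Sum>i=1..m. \<phi> i (L i p)) = (\<lambda>p. (\<Sum>s=1..n. \<psi> s (M s p)) + q p)"
  proof
    fix p :: "'a \<times> 'a"
    obtain u v where p: "p = (u, v)" by (cases p)
    show "(\<Sum>i=1..m. \<phi> i (L i p)) = (\<Sum>s=1..n. \<psi> s (M s p)) + q p"
      using eq[of u v] by (simp add: p L_def M_def)
  qed
  have master: "Deltas (map (L j) P @ map (\<lambda>i. zmult (a j * b i - b j * a i) (ls i)) (filter (\<lambda>i. i \<noteq> j) [1..<Suc m])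
                       @ map (\<lambda>s. zmult (a j * d s - b j * c s) (ks s)) [1..<Suc n]) (\<phi> j) (L j p)
     = Deltas (P @ map (\<lambda>i. (zmult (b i) (ls i), - zmult (a i) (ls i))) (filter (\<lambda>i. i \<noteq> j) [1..<Suc m])
                   @ map (\<lambda>s. (zmult (d s) (ks s), - zmult (c s) (ks s))) [1..<Suc n]) q p"
    if j: "j \<in> {1..m}" for j P p and ls ks :: "nat \<Rightarrow> 'a"
  proof -
    define H where "H = map (\<lambda>i. (zmult (b i) (ls i), - zmult (a i) (ls i))) (filter (\<lambda>i. i \<noteq> j) [1..<Suc m])
                   @ map (\<lambda>s. (zmult (d s) (ks s), - zmult (c s) (ks s))) [1..<Suc n]"
    have mapH: "map (L j) H = map (\<lambda>i. zmult (a j * b i - b j * a i) (ls i)) (filter (\<lambda>i. i \<noteq> j) [1..<Suc m])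
                       @ map (\<lambda>s. zmult (a j * d s - b j * c s) (ks s)) [1..<Suc n]"
      by (simp add: H_def L_def zmult_neg zmult_mult[symmetric] zmult_diffk)
    have killphi: "Deltas (P @ H) (\<lambda>p. \<phi> i (L i p)) = (\<lambda>_. 0)" if i: "i \<in> {1..m}" "i \<noteq> j" for i
    proof -
      have "i \<in> set (filter (\<lambda>i. i \<noteq> j) [1..<Suc m])" using i by auto
      then have "(zmult (b i) (ls i), - zmult (a i) (ls i)) \<in> set H"
        unfolding H_def set_append set_map by (intro UnI1 imageI)
      then have "L i (zmult (b i) (ls i), - zmult (a i) (ls i)) \<in> set (map (L i) (P @ H))"
        by simp
      moreover have "L i (zmult (b i) (ls i), - zmult (a i) (ls i)) = 0"
        by (simp add: L_def zmult_neg zmult_mult[symmetric] mult.commute)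
      ultimately have "Deltas (map (L i) (P @ H)) (\<phi> i) = (\<lambda>_. 0)"
        by (intro Deltas_has0) simp
      then show ?thesis using Deltas_comp[OF Ladd[of i], where hs="P @ H" and g="\<phi> i"] by simp
    qed
    have killpsi: "Deltas (P @ H) (\<lambda>p. \<psi> s (M s p)) = (\<lambda>_. 0)" if s: "s \<in> {1..n}" for s
    proof -
      have "s \<in> set [1..<Suc n]" using s by auto
      then have "(zmult (d s) (ks s), - zmult (c s) (ks s)) \<in> set H"
        unfolding H_def set_append set_map by (intro UnI2 imageI)
      then have "M s (zmult (d s) (ks s), - zmult (c s) (ks s)) \<in> set (map (M s) (P @ H))"
        by simp
      moreover have "M s (zmult (d s) (ks s), - zmult (c s) (ks s)) = 0"
        by (simp add: M_def zmult_neg zmult_mult[symmetric] mult.commute)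
      ultimately have "Deltas (map (M s) (P @ H)) (\<psi> s) = (\<lambda>_. 0)"
        by (intro Deltas_has0) simp
      then show ?thesis using Deltas_comp[OF Madd[of s], where hs="P @ H" and g="\<psi> s"] by simp
    qed
    have "Deltas (P @ H) (\<lambda>p. \<Sum>i=1..m. \<phi> i (L i p)) p
        = (\<Sum>i\<in>{1..m}. Deltas (P @ H) (\<lambda>p. \<phi> i (L i p)) p)"
      by (simp add: Deltas_sum)
    also have "\<dots> = Deltas (P @ H) (\<lambda>p. \<phi> j (L j p)) p
        + (\<Sum>i\<in>{1..m} - {j}. Deltas (P @ H) (\<lambda>p. \<phi> i (L i p)) p)"
      using j by (simp add: sum.remove)
    also have "(\<Sum>i\<in>{1..m} - {j}. Deltas (P @ H) (\<lambda>p. \<phi> i (L i p)) p) = 0"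
      using killphi by (intro sum.neutral) auto
    also have "Deltas (P @ H) (\<lambda>p. \<phi> j (L j p)) p = Deltas (map (L j) P @ map (L j) H) (\<phi> j) (L j p)"
      using Deltas_comp[OF Ladd[of j], where hs="P @ H" and g="\<phi> j"] by simp
    finally have 1: "Deltas (P @ H) (\<lambda>p. \<Sum>i=1..m. \<phi> i (L i p)) p
       = Deltas (map (L j) P @ map (L j) H) (\<phi> j) (L j p)" by simp
    have "Deltas (P @ H) (\<lambda>p. (\<Sum>s=1..n. \<psi> s (M s p)) + q p) p
       = (\<Sum>s\<in>{1..n}. Deltas (P @ H) (\<lambda>p. \<psi> s (M s p)) p) + Deltas (P @ H) q p"
      by (simp add: Deltas_add Deltas_sum)
    also have "(\<Sum>s\<in>{1..n}. Deltas (P @ H) (\<lambda>p. \<psi> s (M s p)) p) = 0"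
      using killpsi by (intro sum.neutral) auto
    finally have 2: "Deltas (P @ H) (\<lambda>p. (\<Sum>s=1..n. \<psi> s (M s p)) + q p) p = Deltas (P @ H) q p"
      by simp
    have 3: "Deltas (P @ H) (\<lambda>p. \<Sum>i=1..m. \<phi> i (L i p)) p
        = Deltas (P @ H) (\<lambda>p. (\<Sum>s=1..n. \<psi> s (M s p)) + q p) p"
      using feq by simp
    have "Deltas (map (L j) P @ map (L j) H) (\<phi> j) (L j p) = Deltas (P @ H) q p"
      using 1 2 3 by simp
    then show ?thesis unfolding mapH by (simp only: H_def)
  qed
  have qpoly: "(Delta (h, k) ^^ Suc l) q = (\<lambda>_. 0)" for h k
    using q_poly by (auto simp: poly_degree_def poly_le_def)
  show ?thesis
  proof (intro conjI impI ballI allI)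
    fix j u v h k and ls ks :: "nat \<Rightarrow> 'a"
    assume j: "j \<in> {1..m}"
    have "L j (h, k) = zmult (a j) h + zmult (b j) k" by (simp add: L_def)
    then show "(Delta (zmult (a j) h + zmult (b j) k) ^^ Suc l)
              (Deltas (map (\<lambda>i. zmult (a j * b i - b j * a i) (ls i)) (filter (\<lambda>i. i \<noteq> j) [1..<Suc m])
                       @ map (\<lambda>s. zmult (a j * d s - b j * c s) (ks s)) [1..<Suc n])
                 (\<phi> j))
              (zmult (a j) u + zmult (b j) v) = 0"
      using master[OF j, where P="replicate (Suc l) (h, k)" and p="(u, v)" and ls=ls and ks=ks]
      unfolding map_append map_replicate Deltas_rep Deltas_rep_zero2[OF qpoly]
      by (simp only: L_def fst_conv snd_conv)
  next
    fix j u v and ls ks :: "nat \<Rightarrow> 'a"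
    assume q0: "q = (\<lambda>_. 0)" and j: "j \<in> {1..m}"
    show "Deltas (map (\<lambda>i. zmult (a j * b i - b j * a i) (ls i)) (filter (\<lambda>i. i \<noteq> j) [1..<Suc m])
                    @ map (\<lambda>s. zmult (a j * d s - b j * c s) (ks s)) [1..<Suc n])
              (\<phi> j) (zmult (a j) u + zmult (b j) v) = 0"
      using master[OF j, where P="[]" and p="(u, v)" and ls=ls and ks=ks]
      unfolding q0 Deltas_zero by (simp only: L_def fst_conv snd_conv list.map append_Nil)
  qed
qed

end
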